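(* Let $\{D_i:i\in I\}$ be a nonempty family of PvMDs and $D:=\bigcap_{i\in I}D_i$, and suppose $D$ is essential with respect to the family $\{D_i:i\in I\}$. Assume that for every $\mathfrak p\in\operatorname{Spec}(D)$ there exist $f\in D\setminus\mathfrak p$ and a finitely generated ideal $\mathfrak a\subseteq\mathfrak p$ of $D$ such that the set of indices $i\in I$ for which there exists a $t$-prime ideal $\mathfrak q$ of $D_i$ with $f\notin\mathfrak q$ and $\mathfrak a\subseteq\mathfrak q\cap D$ is finite. Then $D$ is a PvMD.
   Context: For an integral domain $R$ with quotient field $K$ and nonzero fractional ideal $I$: $(R:I)=\{x\in K:xI\subseteq R\}$, $I^v=(R:(R:I))$, $I^t=\bigcup\{J^v:J\subseteq I \text{ finitely generated}\}$; $I$ is a $t$-ideal if $I=(0)$ or $I=I^t$; a $t$-prime is a prime $t$-ideal (so $(0)$ is a $t$-prime); $t$-maximal ideals are $t$-ideals maximal among proper $t$-ideals. $R$ is a PvMD if $R_{\mathfrak m}$ is a valuation domain for all $t$-maximal $\mathfrak m$. The $D_i$ are subrings of a common field. $D=\bigcap_i D_i$ is said to be essential with respect to $\{D_i\}$ if the family $\{(D_i)_{\mathfrak q}:\mathfrak q\in t\text{-Spec}(D_i), i\in I\}$ is an essential representation of $D$, i.e. each $(D_i)_{\mathfrak q}$ is a valuation domain equal to $D_{\mathfrak p}$ for some prime $\mathfrak p$ of $D$ (and the intersection of the family is $D$). *)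

theory Defs
  imports Main
begin

text \<open>All rings are subrings of a common ambient field of type 'a.\<close>

definition is_subring :: "'a::field set \<Rightarrow> bool" where
  "is_subring R \<longleftrightarrow> 0 \<in> R \<and> 1 \<in> R \<and>
     (\<forall>x\<in>R. \<forall>y\<in>R. x + y \<in> R \<and> x - y \<in> R \<and> x * y \<in> R)"

definition quot_field :: "'a::field set \<Rightarrow> 'a set" where
  "quot_field R = {a / b | a b. a \<in> R \<and> b \<in> R \<and> b \<noteq> 0}"

definition is_ideal :: "'a::field set \<Rightarrow> 'a set \<Rightarrow> bool" where
  "is_ideal R I \<longleftrightarrow> I \<subseteq> R \<and> 0 \<in> I \<and>
     (\<forall>x\<in>I. \<forall>y\<in>I. x + y \<in> I) \<and> (\<forall>r\<in>R. \<forall>x\<in>I. r * x \<in> I)"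

definition is_prime_ideal :: "'a::field set \<Rightarrow> 'a set \<Rightarrow> bool" where
  "is_prime_ideal R P \<longleftrightarrow> is_ideal R P \<and> P \<noteq> R \<and>
     (\<forall>a\<in>R. \<forall>b\<in>R. a * b \<in> P \<longrightarrow> a \<in> P \<or> b \<in> P)"

definition gen_ideal :: "'a::field set \<Rightarrow> 'a set \<Rightarrow> 'a set" where
  "gen_ideal R S = {(\<Sum>s\<in>S. c s * s) | c. \<forall>s\<in>S. c s \<in> R}"

definition fg_ideal :: "'a::field set \<Rightarrow> 'a set \<Rightarrow> bool" where
  "fg_ideal R J \<longleftrightarrow> (\<exists>S. finite S \<and> S \<subseteq> R \<and> J = gen_ideal R S)"

text \<open>(R:I) = {x \<in> K : x I \<subseteq> R}.  For nonzero I contained in the quotient field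
  of R, any such x automatically lies in the quotient field, so we may take x in the
  ambient field.\<close>
definition colon :: "'a::field set \<Rightarrow> 'a set \<Rightarrow> 'a set" where
  "colon R I = {x. \<forall>y\<in>I. x * y \<in> R}"

definition v_closure :: "'a::field set \<Rightarrow> 'a set \<Rightarrow> 'a set" where
  "v_closure R I = colon R (colon R I)"

definition t_closure :: "'a::field set \<Rightarrow> 'a set \<Rightarrow> 'a set" where
  "t_closure R I = \<Union>{v_closure R J | J. \<exists>S. finite S \<and> S \<subseteq> I \<and>
                         J = gen_ideal R S \<and> J \<noteq> {0}}"

definition is_t_ideal :: "'a::field set \<Rightarrow> 'a set \<Rightarrow> bool" where
  "is_t_ideal R I \<longleftrightarrow> I = {0} \<or> I = t_closure R I"

definition is_t_prime :: "'a::field set \<Rightarrow> 'a set \<Rightarrow> bool" where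
  "is_t_prime R P \<longleftrightarrow> is_prime_ideal R P \<and> is_t_ideal R P"

definition is_t_maximal :: "'a::field set \<Rightarrow> 'a set \<Rightarrow> bool" where
  "is_t_maximal R M \<longleftrightarrow> is_ideal R M \<and> M \<noteq> R \<and> is_t_ideal R M \<and>
     (\<forall>N. is_ideal R N \<and> N \<noteq> R \<and> is_t_ideal R N \<and> M \<subseteq> N \<longrightarrow> N = M)"

definition localization :: "'a::field set \<Rightarrow> 'a set \<Rightarrow> 'a set" where
  "localization R P = {a / s | a s. a \<in> R \<and> s \<in> R \<and> s \<notin> P}"

definition is_valuation_domain :: "'a::field set \<Rightarrow> bool" where
  "is_valuation_domain V \<longleftrightarrow> is_subring V \<and>
     (\<forall>x\<in>quot_field V. x \<noteq> 0 \<longrightarrow> x \<in> V \<or> inverse x \<in> V)"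

definition is_PvMD :: "'a::field set \<Rightarrow> bool" where
  "is_PvMD R \<longleftrightarrow> is_subring R \<and>
     (\<forall>M. is_t_maximal R M \<longrightarrow> is_valuation_domain (localization R M))"

definition essential_wrt :: "'i set \<Rightarrow> ('i \<Rightarrow> 'a::field set) \<Rightarrow> bool" where
  "essential_wrt I Ds \<longleftrightarrow>
     (let D = (\<Inter>i\<in>I. Ds i) in
       (\<forall>i\<in>I. \<forall>q. is_t_prime (Ds i) q \<longrightarrow>
          is_valuation_domain (localization (Ds i) q) \<and>
          (\<exists>p. is_prime_ideal D p \<and> localization (Ds i) q = localization D p)) \<and>
       \<Inter>{localization (Ds i) q | i q. i \<in> I \<and> is_t_prime (Ds i) q} = D)"

end

theory Submission
  imports Defs
begin


definition ultra :: "'x set \<Rightarrow> 'x set set \<Rightarrow> bool" where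
  "ultra X U \<longleftrightarrow> U \<subseteq> Pow X \<and> X \<in> U \<and> {} \<notin> U \<and> (\<forall>A\<in>U. \<forall>C\<in>U. A \<inter> C \<in> U) \<and>
     (\<forall>A\<in>U. \<forall>C. A \<subseteq> C \<and> C \<subseteq> X \<longrightarrow> C \<in> U) \<and> (\<forall>A. A \<subseteq> X \<longrightarrow> A \<in> U \<or> X - A \<in> U)"

definition filt :: "'x set \<Rightarrow> 'x set set \<Rightarrow> 'x set set \<Rightarrow> bool" where
  "filt X B F \<longleftrightarrow> B \<subseteq> F \<and> F \<subseteq> Pow X \<and> {} \<notin> F \<and> (\<forall>A\<in>F. \<forall>C\<in>F. A \<inter> C \<in> F) \<and>
     (\<forall>A\<in>F. \<forall>C. A \<subseteq> C \<and> C \<subseteq> X \<longrightarrow> C \<in> F)"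

lemma filtI:
  assumes "B \<subseteq> F" "F \<subseteq> Pow X" "{} \<notin> F" "\<And>A C. A \<in> F \<Longrightarrow> C \<in> F \<Longrightarrow> A \<inter> C \<in> F"
    "\<And>A C. A \<in> F \<Longrightarrow> A \<subseteq> C \<Longrightarrow> C \<subseteq> X \<Longrightarrow> C \<in> F"
  shows "filt X B F"
  unfolding filt_def using assms by blast

lemma ultra_exists:
  assumes B: "B \<subseteq> Pow X" "B \<noteq> {}" "{} \<notin> B" "\<And>b1 b2. b1 \<in> B \<Longrightarrow> b2 \<in> B \<Longrightarrow> \<exists>b3\<in>B. b3 \<subseteq> b1 \<inter> b2"
  shows "\<exists>U. ultra X U \<and> B \<subseteq> U"
proof -
  define \<A> where "\<A> = {F. filt X B F}"
  define F0 where "F0 = {C. C \<subseteq> X \<and> (\<exists>b\<in>B. b \<subseteq> C)}"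
  have "filt X B F0"
  proof (rule filtI)
    show "B \<subseteq> F0" using B(1) unfolding F0_def by blast
    show "F0 \<subseteq> Pow X" unfolding F0_def by blast
    show "{} \<notin> F0"
    proof
      assume "{} \<in> F0"
      then obtain b where "b \<in> B" "b \<subseteq> {}" unfolding F0_def by blast
      then have "b = {}" by blast
      with B(3) \<open>b \<in> B\<close> show False by simp
    qed
    fix A C assume "A \<in> F0" "C \<in> F0"
    then obtain b1 b2 where b: "b1 \<in> B" "b2 \<in> B" "b1 \<subseteq> A" "b2 \<subseteq> C" "A \<subseteq> X" unfolding F0_def by blast
    obtain b3 where b3: "b3 \<in> B" "b3 \<subseteq> b1 \<inter> b2" using B(4)[OF b(1,2)] by blast
    have "b3 \<subseteq> A \<inter> C" "A \<inter> C \<subseteq> X" using b b3 by auto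
    then show "A \<inter> C \<in> F0" using b3(1) unfolding F0_def by blast
  next
    fix A C assume "A \<in> F0" "A \<subseteq> C" "C \<subseteq> X"
    then show "C \<in> F0" unfolding F0_def by blast
  qed
  then have ne: "\<A> \<noteq> {}" unfolding \<A>_def by blast
  have ch: "\<Union>\<C> \<in> \<A>" if C1: "\<C> \<noteq> {}" and C2: "subset.chain \<A> \<C>" for \<C>
  proof -
    have sub: "\<And>F. F \<in> \<C> \<Longrightarrow> filt X B F" using C2 unfolding subset_chain_def \<A>_def by blast
    have cmp: "\<And>F G. F \<in> \<C> \<Longrightarrow> G \<in> \<C> \<Longrightarrow> F \<subseteq> G \<or> G \<subseteq> F"
      using C2 unfolding subset_chain_def by blast
    obtain F1 where F1: "F1 \<in> \<C>" using C1 by blast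
    have "filt X B (\<Union>\<C>)"
    proof (rule filtI)
      show "B \<subseteq> \<Union>\<C>" using sub[OF F1] F1 unfolding filt_def by blast
      show "\<Union>\<C> \<subseteq> Pow X" using sub unfolding filt_def by blast
      show "{} \<notin> \<Union>\<C>" using sub unfolding filt_def by blast
      fix A C assume "A \<in> \<Union>\<C>" "C \<in> \<Union>\<C>"
      then obtain F G where FG: "F \<in> \<C>" "G \<in> \<C>" "A \<in> F" "C \<in> G" by blast
      show "A \<inter> C \<in> \<Union>\<C>"
      proof (cases "F \<subseteq> G")
        case True
        then have "A \<inter> C \<in> G" using FG sub[OF FG(2)] unfolding filt_def by blast
        then show ?thesis using FG(2) by blast
      next
        case False
        with cmp FG have "G \<subseteq> F" by blast
        then have "A \<inter> C \<in> F" using FG sub[OF FG(1)] unfolding filt_def by blast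
        then show ?thesis using FG(1) by blast
      qed
    next
      fix A C assume "A \<in> \<Union>\<C>" "A \<subseteq> C" "C \<subseteq> X"
      then obtain F where "F \<in> \<C>" "A \<in> F" by blast
      then have "C \<in> F" using sub[OF \<open>F \<in> \<C>\<close>] \<open>A \<subseteq> C\<close> \<open>C \<subseteq> X\<close> unfolding filt_def by blast
      then show "C \<in> \<Union>\<C>" using \<open>F \<in> \<C>\<close> by blast
    qed
    then show ?thesis unfolding \<A>_def by blast
  qed
  obtain M where M: "M \<in> \<A>" "\<And>F. F \<in> \<A> \<Longrightarrow> M \<subseteq> F \<Longrightarrow> F = M"
    using subset_Zorn_nonempty[OF ne ch] by blast
  have fM: "filt X B M" using M(1) unfolding \<A>_def by blast
  have MA: "B \<subseteq> M" "M \<subseteq> Pow X" "{} \<notin> M" "\<And>A C. A \<in> M \<Longrightarrow> C \<in> M \<Longrightarrow> A \<inter> C \<in> M"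
     "\<And>A C. A \<in> M \<Longrightarrow> A \<subseteq> C \<Longrightarrow> C \<subseteq> X \<Longrightarrow> C \<in> M" using fM unfolding filt_def by blast+
  obtain b0 where "b0 \<in> B" using B(2) by blast
  then have "b0 \<in> M" "b0 \<subseteq> X" using MA(1) B(1) by auto
  then have XM: "X \<in> M" using MA(5)[of b0 X] by blast
  have compl: "A \<in> M \<or> X - A \<in> M" if "A \<subseteq> X" for A
  proof (cases "\<exists>m\<in>M. m \<inter> A = {}")
    case True
    then obtain m where m: "m \<in> M" "m \<inter> A = {}" by blast
    moreover have "m \<subseteq> X" using MA(2) m(1) by blast
    ultimately have "m \<subseteq> X - A" by blast
    then show ?thesis using MA(5)[of m "X - A"] m(1) by blast
  next
    case False
    define F where "F = {C. C \<subseteq> X \<and> (\<exists>m\<in>M. m \<inter> A \<subseteq> C)}"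
    have MF: "M \<subseteq> F"
    proof
      fix m assume "m \<in> M"
      then have "m \<subseteq> X" using MA(2) by blast
      then show "m \<in> F" unfolding F_def using \<open>m \<in> M\<close> by blast
    qed
    have "filt X B F"
    proof (rule filtI)
      show "B \<subseteq> F" using MF MA(1) by blast
      show "F \<subseteq> Pow X" unfolding F_def by blast
      show "{} \<notin> F"
      proof
        assume "{} \<in> F"
        then obtain m where "m \<in> M" "m \<inter> A \<subseteq> {}" unfolding F_def by blast
        then show False using False by blast
      qed
      fix A' C assume "A' \<in> F" "C \<in> F"
      then obtain m1 m2 where m: "m1 \<in> M" "m2 \<in> M" "m1 \<inter> A \<subseteq> A'" "m2 \<inter> A \<subseteq> C" "A' \<subseteq> X"
        unfolding F_def by blast
      have "m1 \<inter> m2 \<in> M" using MA(4) m(1,2) by blast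
      moreover have "(m1 \<inter> m2) \<inter> A \<subseteq> A' \<inter> C" "A' \<inter> C \<subseteq> X" using m by auto
      ultimately show "A' \<inter> C \<in> F" unfolding F_def by blast
    next
      fix A' C assume "A' \<in> F" "A' \<subseteq> C" "C \<subseteq> X"
      then show "C \<in> F" unfolding F_def by blast
    qed
    then have "F = M" using M(2) MF unfolding \<A>_def by blast
    moreover have "X \<inter> A \<subseteq> A" by blast
    then have "A \<in> F" using XM that unfolding F_def by blast
    ultimately show ?thesis by blast
  qed
  have "ultra X M" unfolding ultra_def
  proof (intro conjI ballI allI impI)
    show "M \<subseteq> Pow X" by (rule MA(2))
    show "X \<in> M" by (rule XM)
    show "{} \<notin> M" by (rule MA(3))
    show "A \<inter> C \<in> M" if "A \<in> M" "C \<in> M" for A C using MA(4) that .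
    show "C \<in> M" if "A \<in> M" "A \<subseteq> C \<and> C \<subseteq> X" for A C using MA(5) that by blast
    show "A \<in> M \<or> X - A \<in> M" if "A \<subseteq> X" for A using compl that .
  qed
  then show ?thesis using MA(1) by blast
qed

lemma ultra_union:
  assumes "ultra X U" "A \<union> C \<in> U" "A \<subseteq> X" "C \<subseteq> X"
  shows "A \<in> U \<or> C \<in> U"
proof (rule ccontr)
  have cm: "\<And>A. A \<subseteq> X \<Longrightarrow> A \<in> U \<or> X - A \<in> U" and it: "\<And>A C. A \<in> U \<Longrightarrow> C \<in> U \<Longrightarrow> A \<inter> C \<in> U"
    and em: "{} \<notin> U" using assms(1) unfolding ultra_def by blast+
  assume "\<not> ?thesis"
  then have "X - A \<in> U" "X - C \<in> U" using cm assms(3,4) by blast+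
  then have "(X - A) \<inter> (X - C) \<inter> (A \<union> C) \<in> U" using it assms(2) by blast
  moreover have "(X - A) \<inter> (X - C) \<inter> (A \<union> C) = {}" by blast
  ultimately show False using em by simp
qed

lemma ultra_Union:
  assumes "ultra X U" "finite K" "(\<Union>k\<in>K. A k) \<in> U" "\<And>k. k \<in> K \<Longrightarrow> A k \<subseteq> X"
  shows "\<exists>k\<in>K. A k \<in> U"
  using assms(2,3,4)
proof (induction K rule: finite_induct)
  case empty
  then show ?case using assms(1) unfolding ultra_def by simp
next
  case (insert k K)
  have "A k \<union> (\<Union>k\<in>K. A k) \<in> U" using insert.prems by simp
  then have "A k \<in> U \<or> (\<Union>k\<in>K. A k) \<in> U"
    using ultra_union[OF assms(1)] insert.prems(2) by blast
  then show ?case using insert by blast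
qed



lemma subring_sum:
  assumes "is_subring R" "\<And>s. s \<in> S \<Longrightarrow> f s \<in> R"
  shows "sum f S \<in> R"
  using assms(2)
proof (induction S rule: infinite_finite_induct)
  case (infinite A) then show ?case using assms(1) by (simp add: is_subring_def)
next
  case empty then show ?case using assms(1) by (simp add: is_subring_def)
next
  case (insert x F) then show ?case using assms(1) by (simp add: is_subring_def)
qed

lemma subring_prod:
  assumes "is_subring R" "\<And>s. s \<in> S \<Longrightarrow> f s \<in> R"
  shows "prod f S \<in> R"
  using assms(2)
proof (induction S rule: infinite_finite_induct)
  case (infinite A) then show ?case using assms(1) by (simp add: is_subring_def)
next
  case empty then show ?case using assms(1) by (simp add: is_subring_def)
next
  case (insert x F) then show ?case using assms(1) by (simp add: is_subring_def)
qed

lemma ideal_sum: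
  assumes "is_ideal R P" "\<And>s. s \<in> S \<Longrightarrow> f s \<in> P"
  shows "sum f S \<in> P"
  using assms(2)
proof (induction S rule: infinite_finite_induct)
  case (infinite A) then show ?case using assms(1) by (simp add: is_ideal_def)
next
  case empty then show ?case using assms(1) by (simp add: is_ideal_def)
next
  case (insert x F) then show ?case using assms(1) by (simp add: is_ideal_def)
qed

lemma gen_ideal_sub:
  assumes "is_ideal R P" "D \<subseteq> R" "S \<subseteq> P"
  shows "gen_ideal D S \<subseteq> P"
proof
  fix x assume "x \<in> gen_ideal D S"
  then obtain c where c: "x = (\<Sum>s\<in>S. c s * s)" "\<forall>s\<in>S. c s \<in> D" unfolding gen_ideal_def by blast
  have "(\<Sum>s\<in>S. c s * s) \<in> P"
  proof (rule ideal_sum[OF assms(1)])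
    fix s assume "s \<in> S"
    then have "c s \<in> R" "s \<in> P" using assms(2,3) c(2) by auto
    then show "c s * s \<in> P" using assms(1) unfolding is_ideal_def by blast
  qed
  then show "x \<in> P" using c by simp
qed

lemma gen_ideal_in_R:
  assumes "is_subring R" "S \<subseteq> R"
  shows "gen_ideal R S \<subseteq> R"
proof
  fix x assume "x \<in> gen_ideal R S"
  then obtain c where c: "x = (\<Sum>s\<in>S. c s * s)" "\<forall>s\<in>S. c s \<in> R" unfolding gen_ideal_def by blast
  have "(\<Sum>s\<in>S. c s * s) \<in> R"
    by (rule subring_sum[OF assms(1)]) (use assms c in \<open>auto simp: is_subring_def\<close>)
  then show "x \<in> R" using c by simp
qed

lemma gen_ideal_mem:
  assumes "is_subring R" "finite S" "x \<in> S"
  shows "x \<in> gen_ideal R S"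
proof -
  define c where "c = (\<lambda>s. if s = x then (1::'a) else 0)"
  have "(\<Sum>s\<in>S. c s * s) = (\<Sum>s\<in>S. if s = x then x else 0)"
    by (rule sum.cong) (auto simp: c_def)
  also have "\<dots> = x" using assms by simp
  finally have "(\<Sum>s\<in>S. c s * s) = x" .
  moreover have "\<forall>s\<in>S. c s \<in> R" using assms(1) by (auto simp: c_def is_subring_def)
  ultimately show ?thesis unfolding gen_ideal_def by force
qed

lemma gen_ideal_zero:
  assumes "gen_ideal R S \<noteq> {0}" "is_subring R"
  shows "\<exists>s\<in>S. s \<noteq> 0"
proof (rule ccontr)
  assume "\<not> ?thesis"
  then have z: "\<forall>s\<in>S. s = 0" by blast
  have "gen_ideal R S \<subseteq> {0}" unfolding gen_ideal_def using z by (auto intro!: sum.neutral)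
  moreover have "0 \<in> gen_ideal R S" unfolding gen_ideal_def
    using assms(2) by (auto simp: is_subring_def intro!: exI[of _ "\<lambda>_. 0"])
  ultimately show False using assms(1) by blast
qed

lemma v_sub:
  assumes "is_subring R" "J \<subseteq> R"
  shows "v_closure R J \<subseteq> R"
proof
  fix x assume "x \<in> v_closure R J"
  moreover have "1 \<in> colon R J" using assms unfolding colon_def by auto
  ultimately have "x * 1 \<in> R" unfolding v_closure_def colon_def by blast
  then show "x \<in> R" by simp
qed

lemma J_sub_v: "J \<subseteq> v_closure R J"
  unfolding v_closure_def colon_def by (auto simp: mult.commute)

lemma zero_v: "is_subring R \<Longrightarrow> 0 \<in> v_closure R J"
  unfolding v_closure_def colon_def is_subring_def by auto

lemma ideal_one: "is_ideal R P \<Longrightarrow> 1 \<in> P \<Longrightarrow> P = R"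
  unfolding is_ideal_def by (metis mult.right_neutral subsetI subset_antisym)

lemma prime_one: "is_prime_ideal R P \<Longrightarrow> 1 \<notin> P"
  unfolding is_prime_ideal_def using ideal_one by blast

lemma prime_zero: "is_prime_ideal R P \<Longrightarrow> 0 \<in> P"
  unfolding is_prime_ideal_def is_ideal_def by blast

lemma loc_inv:
  assumes R: "is_subring R" and P: "is_prime_ideal R P" and x: "x \<in> R" "x \<noteq> 0"
  shows "inverse x \<in> localization R P \<longleftrightarrow> x \<notin> P"
proof
  assume "inverse x \<in> localization R P"
  then obtain a s where as: "a \<in> R" "s \<in> R" "s \<notin> P" "inverse x = a / s" unfolding localization_def by blast
  have "s \<noteq> 0" using as(3) prime_zero[OF P] by auto
  then have "s = a * x" using as(4) x(2) by (simp add: field_simps)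
  show "x \<notin> P"
  proof
    assume "x \<in> P"
    have "\<forall>r\<in>R. \<forall>y\<in>P. r * y \<in> P" using P unfolding is_prime_ideal_def is_ideal_def by blast
    then have "a * x \<in> P" using as(1) \<open>x \<in> P\<close> by blast
    then show False using \<open>s = a * x\<close> as(3) by simp
  qed
next
  assume "x \<notin> P"
  moreover have "inverse x = 1 / x" by (simp add: divide_inverse)
  ultimately show "inverse x \<in> localization R P" using R x unfolding localization_def is_subring_def by blast
qed

lemma R_sub_loc:
  assumes R: "is_subring R" and P: "is_prime_ideal R P"
  shows "R \<subseteq> localization R P"
proof
  fix x assume "x \<in> R"
  moreover have "x = x / 1" by simp
  ultimately show "x \<in> localization R P" using R prime_one[OF P] unfolding localization_def is_subring_def by blast
qed

lemma loc_contract: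
  assumes D: "is_subring D" and R: "is_subring R" and DR: "D \<subseteq> R"
    and P: "is_prime_ideal D P" and Q: "is_prime_ideal R Q"
    and eq: "localization R Q = localization D P"
  shows "P = Q \<inter> D"
proof -
  have PD: "P \<subseteq> D" using P unfolding is_prime_ideal_def is_ideal_def by blast
  have "x \<in> P \<longleftrightarrow> x \<in> Q" if "x \<in> D" for x
  proof (cases "x = 0")
    case True then show ?thesis using prime_zero[OF P] prime_zero[OF Q] by simp
  next
    case False
    have "x \<in> P \<longleftrightarrow> inverse x \<notin> localization D P" using loc_inv[OF D P that False] by blast
    also have "\<dots> \<longleftrightarrow> inverse x \<notin> localization R Q" using eq by simp
    also have "\<dots> \<longleftrightarrow> x \<in> Q" using loc_inv[OF R Q _ False] that DR by blast
    finally show ?thesis .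
  qed
  then show ?thesis using PD by blast
qed

lemma prod_notin:
  assumes R: "is_subring R" and P: "is_prime_ideal R P" and "finite S" "\<And>s. s \<in> S \<Longrightarrow> t s \<in> R \<and> t s \<notin> P"
  shows "prod t S \<in> R \<and> prod t S \<notin> P"
  using assms(3,4)
proof (induction S rule: finite_induct)
  case empty then show ?case using R prime_one[OF P] by (simp add: is_subring_def)
next
  case (insert x F)
  then have "t x \<in> R" "t x \<notin> P" "prod t F \<in> R" "prod t F \<notin> P" by auto
  then have "t x * prod t F \<in> R" using R unfolding is_subring_def by blast
  moreover have "t x * prod t F \<notin> P" using P \<open>t x \<in> R\<close> \<open>t x \<notin> P\<close> \<open>prod t F \<in> R\<close> \<open>prod t F \<notin> P\<close>
    unfolding is_prime_ideal_def by blast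
  ultimately show ?case using insert by simp
qed

lemma val_key:
  assumes V: "is_valuation_domain V" and "u \<in> V" "v \<in> V" "u \<noteq> 0" "v \<noteq> 0"
  shows "u / v \<in> V \<or> v / u \<in> V"
proof -
  have "u / v \<in> quot_field V" unfolding quot_field_def using assms by blast
  moreover have "u / v \<noteq> 0" using assms by simp
  moreover have "inverse (u / v) = v / u" by simp
  ultimately show ?thesis using V unfolding is_valuation_domain_def by metis
qed

lemma choose_g:
  assumes V: "is_valuation_domain V" and "finite S" "S \<subseteq> V" "\<exists>s\<in>S. s \<noteq> 0"
  shows "\<exists>g\<in>S. g \<noteq> 0 \<and> (\<forall>s\<in>S. s / g \<in> V)"
  using assms(2-4)
proof (induction S rule: finite_induct)
  case empty then show ?case by simp
next
  case (insert x F)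
  have Vs: "is_subring V" using V unfolding is_valuation_domain_def by blast
  have one: "1 \<in> V" and zero: "0 \<in> V" using Vs unfolding is_subring_def by auto
  have mul: "\<And>u v. u \<in> V \<Longrightarrow> v \<in> V \<Longrightarrow> u * v \<in> V" using Vs unfolding is_subring_def by auto
  show ?case
  proof (cases "\<exists>s\<in>F. s \<noteq> 0")
    case False
    then have "x \<noteq> 0" using insert.prems by auto
    then show ?thesis using False one zero by auto
  next
    case True
    then obtain g0 where g0: "g0 \<in> F" "g0 \<noteq> 0" "\<forall>s\<in>F. s / g0 \<in> V" using insert by auto
    show ?thesis
    proof (cases "x / g0 \<in> V")
      case True then show ?thesis using g0 by auto
    next
      case False
      then have "x \<noteq> 0" using zero by auto
      then have "g0 / x \<in> V" using val_key[OF V, of x g0] False insert.prems g0 by auto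
      have "\<forall>s\<in>F. s / x \<in> V"
      proof
        fix s assume "s \<in> F"
        have eq: "s / x = (s / g0) * (g0 / x)" using g0(2) by simp
        have "(s / g0) * (g0 / x) \<in> V" using mul g0(3) \<open>s \<in> F\<close> \<open>g0 / x \<in> V\<close> by blast
        then show "s / x \<in> V" unfolding eq[symmetric] .
      qed
      then show ?thesis using \<open>x \<noteq> 0\<close> one by auto
    qed
  qed
qed



lemma L1:
  assumes D: "is_subring D" and p: "is_prime_ideal D p" and V: "is_valuation_domain (localization D p)"
    and S: "finite S" "S \<subseteq> p" "gen_ideal D S \<noteq> {0}" and z: "z \<in> v_closure D (gen_ideal D S)"
  shows "z \<in> p"
proof -
  let ?V = "localization D p"
  let ?J = "gen_ideal D S"
  have pD: "p \<subseteq> D" using p unfolding is_prime_ideal_def is_ideal_def by blast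
  have DV: "D \<subseteq> ?V" using R_sub_loc[OF D p] .
  obtain g where g: "g \<in> S" "g \<noteq> 0" "\<forall>s\<in>S. s / g \<in> ?V"
    using choose_g[OF V S(1)] S(2) pD DV gen_ideal_zero[OF S(3) D] by blast
  then have "\<forall>s\<in>S. \<exists>a t. a \<in> D \<and> t \<in> D \<and> t \<notin> p \<and> s / g = a / t"
    unfolding localization_def by blast
  then obtain a t where at: "\<And>s. s \<in> S \<Longrightarrow> a s \<in> D \<and> t s \<in> D \<and> t s \<notin> p \<and> s / g = a s / t s"
    by metis
  define T where "T = prod t S"
  have T: "T \<in> D" "T \<notin> p" using prod_notin[OF D p S(1), of t] at unfolding T_def by auto
  have tnz: "t s \<noteq> 0" if "s \<in> S" for s using at[OF that] prime_zero[OF p] by auto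
  define w where "w = T / g"
  have ws: "w * s \<in> D" if "s \<in> S" for s
  proof -
    have Teq: "T = t s * prod t (S - {s})" using prod.remove[OF S(1) that] T_def by simp
    have "w * s = T * (s / g)" by (simp add: w_def)
    also have "\<dots> = t s * prod t (S - {s}) * (a s / t s)" using Teq at[OF that] by simp
    also have "\<dots> = a s * prod t (S - {s})" using tnz[OF that] by (simp add: field_simps)
    finally have "w * s = a s * prod t (S - {s})" .
    moreover have "prod t (S - {s}) \<in> D" by (rule subring_prod[OF D]) (use at in auto)
    ultimately show ?thesis using at[OF that] D unfolding is_subring_def by auto
  qed
  have wJ: "w \<in> colon D ?J"
    unfolding colon_def
  proof (intro CollectI ballI)
    fix j assume "j \<in> ?J"
    then obtain c where c: "j = (\<Sum>s\<in>S. c s * s)" "\<forall>s\<in>S. c s \<in> D" unfolding gen_ideal_def by blast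
    have "w * j = (\<Sum>s\<in>S. c s * (w * s))" unfolding c by (simp add: sum_distrib_left algebra_simps)
    also have "\<dots> \<in> D" by (rule subring_sum[OF D]) (use c ws D in \<open>auto simp: is_subring_def\<close>)
    finally show "w * j \<in> D" .
  qed
  have JD: "?J \<subseteq> D" using gen_ideal_in_R[OF D] S(2) pD by blast
  have zD: "z \<in> D" using v_sub[OF D JD] z by blast
  have "z * w \<in> D" using z wJ unfolding v_closure_def colon_def by blast
  then obtain d where d: "d \<in> D" "z * w = d" by blast
  then have "z * T = d * g" using g(2) by (simp add: w_def field_simps)
  moreover have "d * g \<in> p" using d(1) g(1) S(2) p unfolding is_prime_ideal_def is_ideal_def by blast
  ultimately have "z * T \<in> p" by simp
  then show "z \<in> p" using p zD T unfolding is_prime_ideal_def by blast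
qed

lemma zero_t_prime:
  assumes R: "is_subring R"
  shows "is_t_prime R {0}"
proof -
  have "is_ideal R {0}" using R unfolding is_ideal_def is_subring_def by auto
  moreover have "{0} \<noteq> R" using R unfolding is_subring_def by auto
  ultimately show ?thesis unfolding is_t_prime_def is_prime_ideal_def is_t_ideal_def by auto
qed

lemma t_closure_intro:
  assumes "finite S" "S \<subseteq> Q" "gen_ideal R S \<noteq> {0}" "z \<in> v_closure R (gen_ideal R S)"
  shows "z \<in> t_closure R Q"
proof -
  have "v_closure R (gen_ideal R S) \<in> {v_closure R J | J. \<exists>S. finite S \<and> S \<subseteq> Q \<and>
                         J = gen_ideal R S \<and> J \<noteq> {0}}" using assms(1-3) by blast
  then show ?thesis unfolding t_closure_def using assms(4) by blast
qed

lemma sub_t_closure: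
  assumes R: "is_subring R" and ne: "Q \<noteq> {0}"
  shows "Q \<subseteq> t_closure R Q"
proof
  fix x assume x: "x \<in> Q"
  obtain x' where x': "x' \<in> Q" "x' \<noteq> 0"
  proof (cases "x = 0")
    case True
    then show ?thesis using ne x that by blast
  next
    case False then show ?thesis using that x by blast
  qed
  let ?J = "gen_ideal R {x'}"
  have "x' \<in> ?J" using gen_ideal_mem[OF R] by simp
  then have Jnz: "?J \<noteq> {0}" using x' by blast
  have "x \<in> v_closure R (gen_ideal R {x})" if "x \<noteq> 0"
    using gen_ideal_mem[OF R, of "{x}" x] J_sub_v by auto
  moreover have "x \<in> v_closure R ?J" if "x = 0" using zero_v[OF R] that by simp
  moreover have "gen_ideal R {x} \<noteq> {0}" if "x \<noteq> 0"
    using gen_ideal_mem[OF R, of "{x}" x] that by auto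
  ultimately show "x \<in> t_closure R Q"
  proof (cases "x = 0")
    case True
    then show ?thesis using t_closure_intro[of "{x'}" Q R x] x' Jnz zero_v[OF R] by simp
  next
    case False
    then show ?thesis using t_closure_intro[of "{x}" Q R x] x
      gen_ideal_mem[OF R, of "{x}" x] J_sub_v[of "gen_ideal R {x}" R] by auto
  qed
qed

lemma t_ideal_intro:
  assumes R: "is_subring R" and "Q \<noteq> {0} \<Longrightarrow> t_closure R Q \<subseteq> Q"
  shows "is_t_ideal R Q"
  using sub_t_closure[OF R] assms(2) unfolding is_t_ideal_def by blast



theorem theorem2p14:
  fixes I :: "'i set" and Ds :: "'i \<Rightarrow> 'a::field set"
  assumes "I \<noteq> {}"
    and "\<And>i. i \<in> I \<Longrightarrow> is_PvMD (Ds i)"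
    and "essential_wrt I Ds"
    and "\<And>p. is_prime_ideal (\<Inter>i\<in>I. Ds i) p \<Longrightarrow>
           \<exists>f \<in> (\<Inter>i\<in>I. Ds i) - p. \<exists>a. fg_ideal (\<Inter>i\<in>I. Ds i) a \<and> a \<subseteq> p \<and>
             finite {i \<in> I. \<exists>q. is_t_prime (Ds i) q \<and> f \<notin> q \<and> a \<subseteq> q \<inter> (\<Inter>i\<in>I. Ds i)}"
  shows "is_PvMD (\<Inter>i\<in>I. Ds i)"
proof -
  define D where "D = (\<Inter>i\<in>I. Ds i)"
  have subi: "\<And>i. i \<in> I \<Longrightarrow> is_subring (Ds i)" using assms(2) unfolding is_PvMD_def by blast
  have DDi: "\<And>i. i \<in> I \<Longrightarrow> D \<subseteq> Ds i" unfolding D_def by blast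
  have Dsub: "is_subring D" unfolding D_def is_subring_def using subi assms(1)
    by (auto simp: is_subring_def)
  have ess1: "\<And>i q. i \<in> I \<Longrightarrow> is_t_prime (Ds i) q \<Longrightarrow> is_valuation_domain (localization (Ds i) q) \<and>
          (\<exists>p. is_prime_ideal D p \<and> localization (Ds i) q = localization D p)"
    using assms(3) unfolding essential_wrt_def Let_def D_def by blast
  have ess2: "\<Inter>{localization (Ds i) q | i q. i \<in> I \<and> is_t_prime (Ds i) q} = D"
    using assms(3) unfolding essential_wrt_def Let_def D_def by blast
  have ess3: "\<exists>p. is_prime_ideal D p \<and> is_valuation_domain (localization D p) \<and> p = q \<inter> D"
    if iqa: "i \<in> I" "is_t_prime (Ds i) q" for i q
  proof -
    obtain p where p: "is_prime_ideal D p" "localization (Ds i) q = localization D p"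
      "is_valuation_domain (localization (Ds i) q)" using ess1[OF iqa] by blast
    have "p = q \<inter> D" using loc_contract[OF Dsub subi[OF iqa(1)] DDi[OF iqa(1)] p(1) _ p(2)]
        iqa(2) unfolding is_t_prime_def by blast
    then show ?thesis using p by auto
  qed
  have hyp: "\<And>p. is_prime_ideal D p \<Longrightarrow> \<exists>f\<in>D - p. \<exists>a. fg_ideal D a \<and> a \<subseteq> p \<and>
      finite {i\<in>I. \<exists>q. is_t_prime (Ds i) q \<and> f \<notin> q \<and> a \<subseteq> q \<inter> D}"
    using assms(4) unfolding D_def by blast
  have tp: "is_ideal (Ds i) q \<and> q \<noteq> Ds i \<and> 0 \<in> q \<and> 1 \<notin> q \<and> q \<subseteq> Ds i \<and>
      (\<forall>x\<in>q. \<forall>y\<in>q. x + y \<in> q) \<and> (\<forall>r\<in>Ds i. \<forall>x\<in>q. r * x \<in> q) \<and>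
      (\<forall>a\<in>Ds i. \<forall>b\<in>Ds i. a * b \<in> q \<longrightarrow> a \<in> q \<or> b \<in> q) \<and> is_t_ideal (Ds i) q"
    if "is_t_prime (Ds i) q" for i q
    using that prime_one[of "Ds i" q] unfolding is_t_prime_def is_prime_ideal_def is_ideal_def by blast
  have "\<forall>M. is_t_maximal D M \<longrightarrow> is_valuation_domain (localization D M)"
  proof (intro allI impI)
    fix M assume Mt: "is_t_maximal D M"
    have Mi: "is_ideal D M" "M \<noteq> D" "is_t_ideal D M"
      "\<And>N. is_ideal D N \<Longrightarrow> N \<noteq> D \<Longrightarrow> is_t_ideal D N \<Longrightarrow> M \<subseteq> N \<Longrightarrow> N = M"
      using Mt unfolding is_t_maximal_def by auto
    have MD: "M \<subseteq> D" using Mi(1) unfolding is_ideal_def by blast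
    have oneM: "1 \<notin> M" using ideal_one[OF Mi(1)] Mi(2) by blast
    define X where "X = {(i,q). i \<in> I \<and> is_t_prime (Ds i) q}"
    define B where "B = {{y\<in>X. S \<subseteq> snd y} | S. finite S \<and> S \<subseteq> M}"
    have base_ne: "{y\<in>X. S \<subseteq> snd y} \<noteq> {}" if "finite S" "S \<subseteq> M" for S
    proof (cases "S \<subseteq> {0}")
      case True
      obtain i where "i \<in> I" using assms(1) by blast
      then have "(i, {0}) \<in> X" using zero_t_prime[OF subi] unfolding X_def by blast
      then show ?thesis using True by force
    next
      case False
      let ?J = "gen_ideal D S"
      have SD: "S \<subseteq> D" using that MD by blast
      obtain s0 where s0: "s0 \<in> S" "s0 \<noteq> 0" using False by blast
      have "s0 \<in> ?J" using gen_ideal_mem[OF Dsub that(1) s0(1)] .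
      then have Jnz: "?J \<noteq> {0}" using s0 by blast
      have "M \<noteq> {0}" using False that(2) by blast
      then have Mtc: "M = t_closure D M" using Mi(3) unfolding is_t_ideal_def by blast
      have "v_closure D ?J \<subseteq> t_closure D M" using t_closure_intro[OF that Jnz] by blast
      then have "v_closure D ?J \<subseteq> M" using Mtc by simp
      then have "1 \<notin> v_closure D ?J" using oneM by blast
      then obtain z where z: "\<forall>j\<in>?J. z * j \<in> D" "z \<notin> D"
        unfolding v_closure_def colon_def by auto
      then obtain i q where iq: "i \<in> I" "is_t_prime (Ds i) q" "z \<notin> localization (Ds i) q"
        using ess2 by blast
      have "S \<subseteq> q"
      proof
        fix s assume s: "s \<in> S"
        show "s \<in> q"
        proof (rule ccontr)
          assume sq: "s \<notin> q"
          have sDi: "s \<in> Ds i" using s SD DDi[OF iq(1)] by blast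
          have snz: "s \<noteq> 0" using sq tp[OF iq(2)] by blast
          have "z * s \<in> D" using z(1) gen_ideal_mem[OF Dsub that(1) s] by blast
          then have "z * s \<in> Ds i" using DDi[OF iq(1)] by blast
          moreover have "z = (z * s) / s" using snz by simp
          ultimately have "z \<in> localization (Ds i) q" using sDi sq unfolding localization_def by blast
          then show False using iq(3) by blast
        qed
      qed
      then have "(i, q) \<in> {y\<in>X. S \<subseteq> snd y}" using iq unfolding X_def by simp
      then show ?thesis by blast
    qed
    have "\<exists>U. ultra X U \<and> B \<subseteq> U"
    proof (rule ultra_exists)
      show "B \<subseteq> Pow X" unfolding B_def by blast
      show "B \<noteq> {}" unfolding B_def by blast
      show "{} \<notin> B" unfolding B_def using base_ne by fastforce
      fix b1 b2 assume "b1 \<in> B" "b2 \<in> B"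
      then obtain S1 S2 where S12: "finite S1" "S1 \<subseteq> M" "b1 = {y\<in>X. S1 \<subseteq> snd y}"
        "finite S2" "S2 \<subseteq> M" "b2 = {y\<in>X. S2 \<subseteq> snd y}" unfolding B_def by blast
      then have "finite (S1 \<union> S2)" "S1 \<union> S2 \<subseteq> M" by auto
      then have "{y\<in>X. S1 \<union> S2 \<subseteq> snd y} \<in> B" unfolding B_def by blast
      moreover have "{y\<in>X. S1 \<union> S2 \<subseteq> snd y} \<subseteq> b1 \<inter> b2" using S12(3,6) by auto
      ultimately show "\<exists>b3\<in>B. b3 \<subseteq> b1 \<inter> b2" by blast
    qed
    then obtain U where U: "ultra X U" "B \<subseteq> U" by blast
    have uI: "\<And>A C. A \<in> U \<Longrightarrow> C \<in> U \<Longrightarrow> A \<inter> C \<in> U"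
      and uUp: "\<And>A C. A \<in> U \<Longrightarrow> A \<subseteq> C \<Longrightarrow> C \<subseteq> X \<Longrightarrow> C \<in> U"
      and uE: "{} \<notin> U" and uX: "X \<in> U" and uC: "\<And>A. A \<subseteq> X \<Longrightarrow> A \<notin> U \<Longrightarrow> X - A \<in> U"
      using U(1) unfolding ultra_def by blast+
    define mem where "mem x = {y\<in>X. x \<in> snd y}" for x
    have memX: "\<And>x. mem x \<subseteq> X" unfolding mem_def by blast
    have Bmem: "\<And>S. finite S \<Longrightarrow> S \<subseteq> M \<Longrightarrow> {y\<in>X. S \<subseteq> snd y} \<in> U" using U(2) unfolding B_def by blast
    have memfin: "{y\<in>X. S \<subseteq> snd y} \<in> U" if "finite S" "\<forall>s\<in>S. mem s \<in> U" for S
      using that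
    proof (induction S rule: finite_induct)
      case empty then show ?case using uX by simp
    next
      case (insert x F)
      have "mem x \<inter> {y\<in>X. F \<subseteq> snd y} \<in> U" using insert uI by simp
      moreover have "mem x \<inter> {y\<in>X. F \<subseteq> snd y} = {y\<in>X. insert x F \<subseteq> snd y}" unfolding mem_def by auto
      ultimately show ?case by simp
    qed
    have Xt: "\<And>y. y \<in> X \<Longrightarrow> fst y \<in> I \<and> is_t_prime (Ds (fst y)) (snd y)" unfolding X_def by auto
    have mem0: "mem 0 = X" unfolding mem_def using Xt tp by auto
    have tpX: "is_ideal (Ds (fst y)) (snd y) \<and> snd y \<noteq> Ds (fst y) \<and> 0 \<in> snd y \<and> 1 \<notin> snd y \<and> snd y \<subseteq> Ds (fst y) \<and>
      (\<forall>x\<in>snd y. \<forall>z\<in>snd y. x + z \<in> snd y) \<and> (\<forall>r\<in>Ds (fst y). \<forall>x\<in>snd y. r * x \<in> snd y) \<and>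
      (\<forall>a\<in>Ds (fst y). \<forall>b\<in>Ds (fst y). a * b \<in> snd y \<longrightarrow> a \<in> snd y \<or> b \<in> snd y) \<and> is_t_ideal (Ds (fst y)) (snd y)"
      if "y \<in> X" for y
      using tp[of "fst y" "snd y"] Xt[OF that] by blast
    have mem1: "mem 1 = {}" unfolding mem_def using tpX by blast
    have memadd: "mem x \<inter> mem y \<subseteq> mem (x + y)" for x y
    proof
      fix u assume "u \<in> mem x \<inter> mem y"
      then have "u \<in> X" "x \<in> snd u" "y \<in> snd u" unfolding mem_def by auto
      then show "u \<in> mem (x + y)" using tpX[OF \<open>u \<in> X\<close>] unfolding mem_def by blast
    qed
    define QD where "QD = {x\<in>D. mem x \<in> U}"
    have QD_ideal: "is_ideal D QD"
      unfolding is_ideal_def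
    proof (intro conjI ballI)
      show "QD \<subseteq> D" unfolding QD_def by blast
      show "0 \<in> QD" unfolding QD_def using mem0 uX Dsub by (simp add: is_subring_def)
      fix x y assume "x \<in> QD" "y \<in> QD"
      then show "x + y \<in> QD" unfolding QD_def using memadd uI uUp memX Dsub
        by (auto simp: is_subring_def) (meson uI uUp memX memadd)
    next
      fix r x assume r: "r \<in> D" and x: "x \<in> QD"
      have "mem x \<subseteq> mem (r * x)" unfolding mem_def using Xt tp DDi r by blast
      moreover have "r * x \<in> D" using r x Dsub unfolding QD_def is_subring_def by blast
      ultimately show "r * x \<in> QD" using x uUp memX unfolding QD_def by blast
    qed
    have "1 \<notin> QD" unfolding QD_def using mem1 uE by simp
    then have QD_ne: "QD \<noteq> D" using Dsub unfolding is_subring_def by auto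
    have QD_prime: "is_prime_ideal D QD"
      unfolding is_prime_ideal_def
    proof (intro conjI QD_ideal QD_ne ballI impI)
      fix a b assume ab: "a \<in> D" "b \<in> D" "a * b \<in> QD"
      have "mem (a * b) \<subseteq> mem a \<union> mem b" unfolding mem_def using Xt tp DDi ab(1,2) by blast
      then have "mem a \<union> mem b \<in> U" using ab(3) uUp memX unfolding QD_def by blast
      then have "mem a \<in> U \<or> mem b \<in> U" using ultra_union[OF U(1)] memX by blast
      then show "a \<in> QD \<or> b \<in> QD" using ab unfolding QD_def by blast
    qed
    have MQ: "M \<subseteq> QD"
    proof
      fix x assume "x \<in> M"
      then have "{y\<in>X. {x} \<subseteq> snd y} \<in> U" using Bmem by blast
      moreover have "{y\<in>X. {x} \<subseteq> snd y} = mem x" unfolding mem_def by auto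
      ultimately show "x \<in> QD" using \<open>x \<in> M\<close> MD unfolding QD_def by auto
    qed
    have QD_t: "is_t_ideal D QD"
    proof (rule t_ideal_intro[OF Dsub])
      show "t_closure D QD \<subseteq> QD"
      proof
        fix z assume "z \<in> t_closure D QD"
        then obtain S where S: "finite S" "S \<subseteq> QD" "gen_ideal D S \<noteq> {0}"
          "z \<in> v_closure D (gen_ideal D S)" unfolding t_closure_def by blast
        have SD: "S \<subseteq> D" using S(2) unfolding QD_def by blast
        have A: "{y\<in>X. S \<subseteq> snd y} \<in> U" using memfin S(1,2) unfolding QD_def by blast
        have "{y\<in>X. S \<subseteq> snd y} \<subseteq> mem z"
        proof
          fix y assume y: "y \<in> {y\<in>X. S \<subseteq> snd y}"
          obtain p where p: "is_prime_ideal D p" "is_valuation_domain (localization D p)" "p = snd y \<inter> D"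
            using ess3 Xt y by blast
          have "z \<in> p" using L1[OF Dsub p(1) p(2) S(1) _ S(3) S(4)] p(3) y SD by blast
          then show "y \<in> mem z" using y p(3) unfolding mem_def by blast
        qed
        then have "mem z \<in> U" using A uUp memX by blast
        moreover have "z \<in> D" using v_sub[OF Dsub gen_ideal_in_R[OF Dsub SD]] S(4) by blast
        ultimately show "z \<in> QD" unfolding QD_def by blast
      qed
    qed
    have QDM: "QD = M" using Mi(4)[OF QD_ideal QD_ne QD_t MQ] .
    have Mprime: "is_prime_ideal D M" using QD_prime QDM by simp
    obtain f a where f: "f \<in> D" "f \<notin> M" "fg_ideal D a" "a \<subseteq> M"
      "finite {i\<in>I. \<exists>q. is_t_prime (Ds i) q \<and> f \<notin> q \<and> a \<subseteq> q \<inter> D}"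
      using hyp[OF Mprime] by blast
    define Fin where "Fin = {i\<in>I. \<exists>q. is_t_prime (Ds i) q \<and> f \<notin> q \<and> a \<subseteq> q \<inter> D}"
    obtain Sa where Sa: "finite Sa" "Sa \<subseteq> D" "a = gen_ideal D Sa" using f(3) unfolding fg_ideal_def by blast
    have SaM: "Sa \<subseteq> M" using gen_ideal_mem[OF Dsub Sa(1)] Sa(3) f(4) by blast
    define C where "C = {y\<in>X. f \<notin> snd y \<and> Sa \<subseteq> snd y}"
    have "mem f \<notin> U" using f(1,2) QDM unfolding QD_def by blast
    then have "X - mem f \<in> U" using uC memX by blast
    moreover have "{y\<in>X. Sa \<subseteq> snd y} \<in> U" using Bmem Sa(1) SaM by blast
    moreover have "C = (X - mem f) \<inter> {y\<in>X. Sa \<subseteq> snd y}" unfolding C_def mem_def by auto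
    ultimately have CU: "C \<in> U" using uI by simp
    have "C \<subseteq> (\<Union>i\<in>Fin. {y\<in>X. fst y = i})"
    proof
      fix y assume y: "y \<in> C"
      then have yX: "fst y \<in> I" "is_t_prime (Ds (fst y)) (snd y)" using Xt unfolding C_def by auto
      have "a \<subseteq> snd y" using gen_ideal_sub[of "Ds (fst y)" "snd y" D Sa] tp[OF yX(2)] DDi[OF yX(1)]
          y Sa(3) unfolding C_def by blast
      then have "fst y \<in> Fin" using yX y f(4) MD unfolding Fin_def C_def by blast
      then show "y \<in> (\<Union>i\<in>Fin. {y\<in>X. fst y = i})" using y unfolding C_def by blast
    qed
    then have "(\<Union>i\<in>Fin. {y\<in>X. fst y = i}) \<in> U" using CU uUp by blast
    then obtain i0 where i0: "i0 \<in> Fin" "{y\<in>X. fst y = i0} \<in> U"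
      using ultra_Union[OF U(1), of Fin "\<lambda>i. {y\<in>X. fst y = i}"] f(5) unfolding Fin_def by blast
    have i0I: "i0 \<in> I" using i0(1) unfolding Fin_def by blast
    define Ci where "Ci = {y\<in>X. fst y = i0}"
    have CiU: "Ci \<in> U" using i0(2) unfolding Ci_def .
    have Cit: "\<And>y. y \<in> Ci \<Longrightarrow> is_t_prime (Ds i0) (snd y)" using Xt unfolding Ci_def by auto
    define Qi where "Qi = {x\<in>Ds i0. mem x \<in> U}"
    have Ri: "is_subring (Ds i0)" using subi[OF i0I] .
    have Qi_ideal: "is_ideal (Ds i0) Qi"
      unfolding is_ideal_def
    proof (intro conjI ballI)
      show "Qi \<subseteq> Ds i0" unfolding Qi_def by blast
      show "0 \<in> Qi" unfolding Qi_def using mem0 uX Ri by (simp add: is_subring_def)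
      fix x y assume "x \<in> Qi" "y \<in> Qi"
      then show "x + y \<in> Qi" unfolding Qi_def using memadd uI uUp memX Ri
        by (auto simp: is_subring_def) (meson uI uUp memX memadd)
    next
      fix r x assume r: "r \<in> Ds i0" and x: "x \<in> Qi"
      have "mem x \<inter> Ci \<subseteq> mem (r * x)" unfolding mem_def using Cit tp r by blast
      moreover have "r * x \<in> Ds i0" using r x Ri unfolding Qi_def is_subring_def by blast
      moreover have "mem x \<inter> Ci \<in> U" using x CiU uI unfolding Qi_def by blast
      ultimately show "r * x \<in> Qi" using uUp memX unfolding Qi_def by blast
    qed
    have "1 \<notin> Qi" unfolding Qi_def using mem1 uE by simp
    then have Qi_ne: "Qi \<noteq> Ds i0" using Ri unfolding is_subring_def by auto
    have Qi_prime: "is_prime_ideal (Ds i0) Qi"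
      unfolding is_prime_ideal_def
    proof (intro conjI Qi_ideal Qi_ne ballI impI)
      fix a b assume ab: "a \<in> Ds i0" "b \<in> Ds i0" "a * b \<in> Qi"
      have "mem (a * b) \<inter> Ci \<subseteq> mem a \<union> mem b" unfolding mem_def using Cit tp ab(1,2) by blast
      moreover have "mem (a * b) \<inter> Ci \<in> U" using ab(3) CiU uI unfolding Qi_def by blast
      ultimately have "mem a \<union> mem b \<in> U" using uUp memX by blast
      then have "mem a \<in> U \<or> mem b \<in> U" using ultra_union[OF U(1)] memX by blast
      then show "a \<in> Qi \<or> b \<in> Qi" using ab unfolding Qi_def by blast
    qed
    have Qi_t: "is_t_ideal (Ds i0) Qi"
    proof (rule t_ideal_intro[OF Ri])
      show "t_closure (Ds i0) Qi \<subseteq> Qi"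
      proof
        fix z assume "z \<in> t_closure (Ds i0) Qi"
        then obtain S where S: "finite S" "S \<subseteq> Qi" "gen_ideal (Ds i0) S \<noteq> {0}"
          "z \<in> v_closure (Ds i0) (gen_ideal (Ds i0) S)" unfolding t_closure_def by blast
        have A: "Ci \<inter> {y\<in>X. S \<subseteq> snd y} \<in> U" using memfin S(1,2) CiU uI unfolding Qi_def by blast
        obtain s0 where s0: "s0 \<in> S" "s0 \<noteq> 0" using gen_ideal_zero[OF S(3) Ri] by blast
        have Az: "Ci \<inter> {y\<in>X. S \<subseteq> snd y} \<subseteq> mem z"
        proof
          fix y assume y: "y \<in> Ci \<inter> {y\<in>X. S \<subseteq> snd y}"
          have qt: "is_t_ideal (Ds i0) (snd y)" using tp Cit y by blast
          have "snd y \<noteq> {0}" using y s0 by blast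
          then have "snd y = t_closure (Ds i0) (snd y)" using qt unfolding is_t_ideal_def by blast
          moreover have "S \<subseteq> snd y" using y by blast
          then have "v_closure (Ds i0) (gen_ideal (Ds i0) S) \<subseteq> t_closure (Ds i0) (snd y)"
            using t_closure_intro[OF S(1) _ S(3)] by blast
          ultimately have "z \<in> snd y" using S(4) by blast
          then show "y \<in> mem z" using y unfolding mem_def by blast
        qed
        then have "mem z \<in> U" using A uUp memX by blast
        moreover obtain y where "y \<in> Ci \<inter> {y\<in>X. S \<subseteq> snd y}" using A uE by (metis ex_in_conv)
        then have "z \<in> Ds i0" using Az tp Cit unfolding mem_def by blast
        ultimately show "z \<in> Qi" unfolding Qi_def by blast
      qed
    qed
    have Qit: "is_t_prime (Ds i0) Qi" unfolding is_t_prime_def using Qi_prime Qi_t by blast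
    obtain p where p: "is_prime_ideal D p" "localization (Ds i0) Qi = localization D p"
      "is_valuation_domain (localization (Ds i0) Qi)" using ess1[OF i0I Qit] by blast
    have "p = Qi \<inter> D" using loc_contract[OF Dsub Ri DDi[OF i0I] p(1) Qi_prime p(2)] .
    also have "\<dots> = QD" unfolding Qi_def QD_def using DDi[OF i0I] by blast
    finally have "p = M" using QDM by simp
    then show "is_valuation_domain (localization D M)" using p by simp
  qed
  then show ?thesis using Dsub unfolding is_PvMD_def D_def by blast
qed


end
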